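(* Assume $M=\Gamma\backslash G$ satisfies the strong spectral gap assumption. There exist constants $\eta'\in(0,1)$ and $C'_M>0$, depending only on $M$, such that the following holds. Let $f\colon M\to\mathbb C$ have zero average and finite Sobolev norm $\mathcal S(f)$. For every $\omega>0$ there exist a set $Y=Y(\omega,f)\subset M$ with $\mu(Y)\ge1-\omega$ and a number $m'=m'(\omega)\ge1$ such that for all $x\in Y$ and all $t\ge m'$, \[\Big|\int_0^t f(x\mathbf u^s)\,ds\Big|\le C'_M\,\mathcal S(f)\,t^{1-\eta'}.\]
   Context: $G$ is a connected semisimple linear Lie group, $\Gamma$ a lattice, $M=\Gamma\backslash G$ with Haar probability $\mu$; $\mathbf u^t=\exp(tU)$ with $U\ne0$, $\mathrm{ad}(U)$ nilpotent, and $\phi^t(x)=x\mathbf u^t$. Strong spectral gap: the restriction of the regular representation of $G$ on $L^2(M,\mu)$ to every noncompact simple factor of $G$ is isolated from the trivial representation in the Fell topology. $\mathcal S$ is a Sobolev norm on functions on $M$, with $\sup_M|f|\le\mathcal S(f)$, for which there are $C_M,\tilde\eta>0$ such that $|\langle f\circ\phi^t,g\rangle|\le C_M\mathcal S(f)\mathcal S(g)t^{-\tilde\eta}$ for all $t\ge1$ and all sufficiently smooth zero-average $f,g$. *)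

theory Defs
  imports "HOL-Probability.Probability"
begin

definition corr :: "'a measure \<Rightarrow> (real \<Rightarrow> 'a \<Rightarrow> 'a) \<Rightarrow> ('a \<Rightarrow> complex) \<Rightarrow> ('a \<Rightarrow> complex) \<Rightarrow> real \<Rightarrow> complex" where
  "corr M \<phi> f g t = (\<integral>x. f (\<phi> t x) * cnj (g x) \<partial>M)"

text \<open>Abstract standing assumptions: M is a probability space, phi a jointly measurable,
  measure-preserving flow on it, F the class of functions of finite Sobolev norm S,
  with the sup-norm bound and the polynomial decay of correlations.\<close>
definition mixing_flow_setting ::
  "'a measure \<Rightarrow> (real \<Rightarrow> 'a \<Rightarrow> 'a) \<Rightarrow> ('a \<Rightarrow> complex) set \<Rightarrow> (('a \<Rightarrow> complex) \<Rightarrow> real)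
    \<Rightarrow> real \<Rightarrow> real \<Rightarrow> bool" where
  "mixing_flow_setting M \<phi> F S C\<^sub>M \<eta> \<longleftrightarrow>
     prob_space M \<and>
     (\<lambda>(s, x). \<phi> s x) \<in> (lborel \<Otimes>\<^sub>M M) \<rightarrow>\<^sub>M M \<and>
     (\<forall>x\<in>space M. \<phi> 0 x = x) \<and>
     (\<forall>s t. \<forall>x\<in>space M. \<phi> (s + t) x = \<phi> t (\<phi> s x)) \<and>
     (\<forall>t. distr M M (\<phi> t) = M) \<and>
     C\<^sub>M > 0 \<and> \<eta> > 0 \<and>
     (\<forall>f\<in>F. f \<in> borel_measurable M \<and> (\<forall>x\<in>space M. cmod (f x) \<le> S f)) \<and>
     (\<forall>f\<in>F. \<forall>g\<in>F. \<forall>t::real. t \<ge> 1 \<longrightarrow>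
        (\<integral>x. f x \<partial>M) = 0 \<longrightarrow> (\<integral>x. g x \<partial>M) = 0 \<longrightarrow>
        cmod (corr M \<phi> f g t) \<le> C\<^sub>M * S f * S g * t powr (- \<eta>))"

end

theory Submission
  imports Defs
begin


lemma meas_cnj[measurable]: "(f::'a\<Rightarrow>complex) \<in> borel_measurable M \<Longrightarrow> (\<lambda>x. cnj (f x)) \<in> borel_measurable M"
  by (intro borel_measurable_continuous_on[where f=cnj] continuous_intros)

lemma fin_Icc: "finite_measure (restrict_space lborel {a..b::real})"
  apply (rule finite_measureI)
  apply (simp add: space_restrict_space emeasure_restrict_space emeasure_lborel_Icc_eq)
  done

lemma meas_Icc: "0 \<le> t \<Longrightarrow> measure (restrict_space lborel {0..t::real}) (space (restrict_space lborel {0..t})) = t"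
  by (simp add: space_restrict_space measure_restrict_space)

lemma norm_int_le:
  fixes g :: "'a \<Rightarrow> 'b::{banach, second_countable_topology}"
  assumes "finite_measure N" "\<And>x. x \<in> space N \<Longrightarrow> norm (g x) \<le> B"
  shows "norm (integral\<^sup>L N g) \<le> B * measure N (space N)"
proof (cases "integrable N g")
  case True
  have "norm (integral\<^sup>L N g) \<le> (\<integral>x. norm (g x) \<partial>N)" by (rule integral_norm_bound)
  also have "\<dots> \<le> (\<integral>x. B \<partial>N)"
    using True assms by (intro integral_mono) (auto intro!: finite_measure.integrable_const)
  also have "\<dots> = B * measure N (space N)" by simp
  finally show ?thesis .
next
  case False
  show ?thesis
  proof (cases "space N = {}")
    case True then show ?thesis using False by (simp add: not_integrable_integral_eq)
  next
    case ne: False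
    then obtain x where "x \<in> space N" by auto
    with assms(2) have "0 \<le> B" by (meson norm_ge_zero order_trans)
    then show ?thesis using False by (simp add: not_integrable_integral_eq)
  qed
qed

lemma norm_int_Icc:
  fixes g :: "real \<Rightarrow> 'b::{banach, second_countable_topology}"
  assumes "0 \<le> t" "\<And>s. s \<in> {0..t} \<Longrightarrow> norm (g s) \<le> B"
  shows "norm (integral\<^sup>L (restrict_space lborel {0..t}) g) \<le> B * t"
  using norm_int_le[OF fin_Icc[of 0 t], where g=g and B=B] assms meas_Icc[OF assms(1)]
  by (auto simp: space_restrict_space)

lemma pow_diff_le:
  fixes x y :: real
  assumes "0 \<le> x" "x \<le> y"
  shows "y ^ a - x ^ a \<le> real a * y ^ (a - 1) * (y - x)"
proof (induction a)
  case 0 then show ?case by simp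
next
  case (Suc a)
  have "y ^ Suc a - x ^ Suc a = y * (y ^ a - x ^ a) + x ^ a * (y - x)"
    by (simp add: algebra_simps)
  also have "\<dots> \<le> y * (real a * y ^ (a - 1) * (y - x)) + y ^ a * (y - x)"
    using Suc assms by (intro add_mono mult_left_mono mult_right_mono power_mono) auto
  also have "\<dots> = real (Suc a) * y ^ (Suc a - 1) * (y - x)"
    by (cases a) (auto simp: algebra_simps)
  finally show ?case .
qed



locale mfs =
  fixes M :: "'a measure" and \<phi> :: "real \<Rightarrow> 'a \<Rightarrow> 'a"
    and F :: "('a \<Rightarrow> complex) set" and S :: "('a \<Rightarrow> complex) \<Rightarrow> real"
    and CM \<eta> :: real
  assumes setting: "mixing_flow_setting M \<phi> F S CM \<eta>"
begin

lemma prob: "prob_space M" using setting by (simp add: mixing_flow_setting_def)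
lemma jmeas: "(\<lambda>(s, x). \<phi> s x) \<in> (lborel \<Otimes>\<^sub>M M) \<rightarrow>\<^sub>M M"
  using setting by (simp add: mixing_flow_setting_def)
lemma flow_add: "x \<in> space M \<Longrightarrow> \<phi> (s + t) x = \<phi> t (\<phi> s x)"
  using setting by (simp add: mixing_flow_setting_def)
lemma distr_eq: "distr M M (\<phi> t) = M"
  using setting by (simp add: mixing_flow_setting_def)
lemma CM_pos: "CM > 0" and eta_pos: "\<eta> > 0"
  using setting by (auto simp: mixing_flow_setting_def)
lemma F_meas: "f \<in> F \<Longrightarrow> f \<in> borel_measurable M"
  using setting by (simp add: mixing_flow_setting_def)
lemma F_bound: "f \<in> F \<Longrightarrow> x \<in> space M \<Longrightarrow> cmod (f x) \<le> S f"
  using setting by (simp add: mixing_flow_setting_def)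
lemma corr_bound: "f \<in> F \<Longrightarrow> g \<in> F \<Longrightarrow> t \<ge> 1 \<Longrightarrow> (\<integral>x. f x \<partial>M) = 0 \<Longrightarrow> (\<integral>x. g x \<partial>M) = 0 \<Longrightarrow>
        cmod (corr M \<phi> f g t) \<le> CM * S f * S g * t powr (- \<eta>)"
  using setting by (simp add: mixing_flow_setting_def)

lemma phi_meas_gen:
  assumes a: "a \<in> N \<rightarrow>\<^sub>M lborel" and b: "b \<in> N \<rightarrow>\<^sub>M M"
  shows "(\<lambda>w. \<phi> (a w) (b w)) \<in> N \<rightarrow>\<^sub>M M"
proof -
  have "(\<lambda>w. (a w, b w)) \<in> N \<rightarrow>\<^sub>M lborel \<Otimes>\<^sub>M M" using a b by (rule measurable_Pair)
  from measurable_comp[OF this jmeas] show ?thesis by (simp add: o_def)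
qed

lemma f_meas_gen:
  assumes "f \<in> F" "a \<in> N \<rightarrow>\<^sub>M lborel" "b \<in> N \<rightarrow>\<^sub>M M"
  shows "(\<lambda>w. f (\<phi> (a w) (b w))) \<in> borel_measurable N"
  using measurable_comp[OF phi_meas_gen[OF assms(2,3)] F_meas[OF assms(1)]] by (simp add: o_def)

lemma phi_t_meas: "\<phi> t \<in> M \<rightarrow>\<^sub>M M"
  using phi_meas_gen[of "\<lambda>_. t" M "\<lambda>x. x"] by simp

lemma phi_space: "x \<in> space M \<Longrightarrow> \<phi> s x \<in> space M"
  using measurable_space[OF phi_t_meas] .

lemma restr_lborel: "(\<lambda>x. x) \<in> restrict_space lborel A \<rightarrow>\<^sub>M lborel"
  by (rule measurable_restrict_space1) simp

lemma to_lborel: "a \<in> N \<rightarrow>\<^sub>M restrict_space lborel A \<Longrightarrow> a \<in> N \<rightarrow>\<^sub>M lborel"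
  using measurable_compose[OF _ restr_lborel] by blast

abbreviation L :: "real \<Rightarrow> real measure" where "L t \<equiv> restrict_space lborel {0..t}"

definition I :: "('a \<Rightarrow> complex) \<Rightarrow> real \<Rightarrow> 'a \<Rightarrow> complex" where
  "I f t x = integral\<^sup>L (L t) (\<lambda>s. f (\<phi> s x))"

lemma I_meas: "f \<in> F \<Longrightarrow> I f t \<in> borel_measurable M"
  unfolding I_def
proof (rule sigma_finite_measure.borel_measurable_lebesgue_integral)
  show "sigma_finite_measure (L t)" using fin_Icc finite_measure_def by blast
  assume "f \<in> F"
  show "(\<lambda>(x, y). f (\<phi> y x)) \<in> borel_measurable (M \<Otimes>\<^sub>M L t)"
  proof -
    have "snd \<in> M \<Otimes>\<^sub>M L t \<rightarrow>\<^sub>M lborel" by (rule to_lborel[OF measurable_snd])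
    from f_meas_gen[OF \<open>f \<in> F\<close> this measurable_fst] show ?thesis by (simp add: case_prod_beta')
  qed
qed

lemma I_bound: "f \<in> F \<Longrightarrow> x \<in> space M \<Longrightarrow> 0 \<le> t \<Longrightarrow> cmod (I f t x) \<le> S f * t"
  unfolding I_def by (rule norm_int_Icc) (auto intro: F_bound phi_space)

end

context mfs begin

lemma S_nonneg: "f \<in> F \<Longrightarrow> 0 \<le> S f"
proof -
  assume f: "f \<in> F"
  have "space M \<noteq> {}" using prob prob_space.not_empty by blast
  then obtain x where "x \<in> space M" by auto
  with F_bound[OF f this] show ?thesis by (meson norm_ge_zero order_trans)
qed

definition E :: "('a \<Rightarrow> complex) \<Rightarrow> real \<Rightarrow> real \<Rightarrow> complex" where
  "E f s r = (\<integral>x. f (\<phi> s x) * cnj (f (\<phi> r x)) \<partial>M)"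

lemma E_corr:
  assumes f: "f \<in> F" and rs: "r \<le> s"
  shows "E f s r = corr M \<phi> f f (s - r)"
proof -
  define h where "h = (\<lambda>y. f (\<phi> (s - r) y) * cnj (f y))"
  have hm: "h \<in> borel_measurable M"
    unfolding h_def using f_meas_gen[OF f, of "\<lambda>_. s - r" M "\<lambda>y. y"] F_meas[OF f] by measurable
  have "E f s r = (\<integral>x. h (\<phi> r x) \<partial>M)"
    unfolding E_def h_def
  proof (rule Bochner_Integration.integral_cong[OF refl])
    fix x assume "x \<in> space M"
    then have "\<phi> (s - r) (\<phi> r x) = \<phi> s x" using flow_add[of x r "s - r"] by simp
    then show "f (\<phi> s x) * cnj (f (\<phi> r x)) = f (\<phi> (s - r) (\<phi> r x)) * cnj (f (\<phi> r x))" by simp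
  qed
  also have "\<dots> = integral\<^sup>L (distr M M (\<phi> r)) h"
    by (rule integral_distr[OF phi_t_meas hm, symmetric])
  also have "\<dots> = integral\<^sup>L M h" by (simp add: distr_eq)
  finally show ?thesis by (simp add: corr_def h_def)
qed

lemma E_swap: "E f s r = cnj (E f r s)"
  using Bochner_Integration.integral_cnj[of M "\<lambda>x. f (\<phi> r x) * cnj (f (\<phi> s x))"]
  unfolding E_def by (simp add: mult.commute)

lemma E_bound:
  assumes f: "f \<in> F" and f0: "(\<integral>x. f x \<partial>M) = 0" and K: "K \<ge> 1"
  shows "cmod (E f s r) \<le> (S f)\<^sup>2 * indicator {s - K<..<s + K} r + CM * (S f)\<^sup>2 * K powr (- \<eta>)"
proof -
  have Sn: "0 \<le> S f" by (rule S_nonneg[OF f])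
  have nn: "0 \<le> CM * (S f)\<^sup>2 * K powr (- \<eta>)" using CM_pos by simp
  show ?thesis
  proof (cases "\<bar>s - r\<bar> < K")
    case True
    have "cmod (E f s r) \<le> (S f * S f) * measure M (space M)"
      unfolding E_def
    proof (rule norm_int_le)
      show "finite_measure M" using prob prob_space_def by blast
      fix x assume x: "x \<in> space M"
      show "cmod (f (\<phi> s x) * cnj (f (\<phi> r x))) \<le> S f * S f"
        unfolding norm_mult complex_mod_cnj
        using F_bound[OF f phi_space[OF x]] Sn by (intro mult_mono) auto
    qed
    also have "\<dots> = (S f)\<^sup>2" using prob_space.prob_space[OF prob] by (simp add: power2_eq_square)
    finally show ?thesis using True nn by (auto simp: indicator_def)
  next
    case False
    then have ind: "indicator {s - K<..<s + K} r = (0::real)" by (auto simp: indicator_def)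
    have key: "cmod (corr M \<phi> f f u) \<le> CM * (S f)\<^sup>2 * K powr (- \<eta>)" if u: "u \<ge> K" for u
    proof -
      have "cmod (corr M \<phi> f f u) \<le> CM * S f * S f * u powr (- \<eta>)"
        using corr_bound[OF f f _ f0 f0] u K by simp
      also have "\<dots> \<le> CM * S f * S f * K powr (- \<eta>)"
        using u K eta_pos CM_pos Sn by (intro mult_left_mono powr_mono2') auto
      finally show ?thesis by (simp add: power2_eq_square)
    qed
    show ?thesis
    proof (cases "r \<le> s")
      case True
      then show ?thesis using False key[of "s - r"] by (simp add: E_corr[OF f True] ind)
    next
      case rs: False
      have "cmod (E f s r) = cmod (E f r s)" by (subst E_swap) simp
      then show ?thesis using False rs key[of "r - s"] by (simp add: E_corr[OF f] ind)
    qed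
  qed
qed

end

context mfs begin

definition H :: "('a \<Rightarrow> complex) \<Rightarrow> 'a \<Rightarrow> real \<Rightarrow> real \<Rightarrow> complex" where
  "H f x s r = f (\<phi> s x) * cnj (f (\<phi> r x))"

lemma H_meas_gen:
  assumes f: "f \<in> F" and a1: "a1 \<in> N \<rightarrow>\<^sub>M lborel" and a2: "a2 \<in> N \<rightarrow>\<^sub>M lborel" and b: "b \<in> N \<rightarrow>\<^sub>M M"
  shows "(\<lambda>w. H f (b w) (a1 w) (a2 w)) \<in> borel_measurable N"
  unfolding H_def using f_meas_gen[OF f a1 b] f_meas_gen[OF f a2 b] by measurable

lemma H_bound:
  assumes f: "f \<in> F" and x: "x \<in> space M"
  shows "norm (H f x s r) \<le> S f * S f"
  unfolding H_def norm_mult complex_mod_cnj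
  using F_bound[OF f phi_space[OF x]] S_nonneg[OF f] by (intro mult_mono) auto

lemma sq_expand:
  assumes x: "x \<in> space M"
  shows "I f t x * cnj (I f t x) = (\<integral>s. (\<integral>r. H f x s r \<partial>L t) \<partial>L t)"
proof -
  have c: "cnj (I f t x) = (\<integral>r. cnj (f (\<phi> r x)) \<partial>L t)"
    unfolding I_def by (rule Bochner_Integration.integral_cnj[symmetric])
  have "I f t x * cnj (I f t x) = (\<integral>s. f (\<phi> s x) * cnj (I f t x) \<partial>L t)"
    unfolding I_def by (rule integral_mult_left_zero[symmetric])
  also have "\<dots> = (\<integral>s. (\<integral>r. H f x s r \<partial>L t) \<partial>L t)"
    unfolding c H_def by (simp add: integral_mult_right_zero)
  finally show ?thesis .
qed

lemma finM: "finite_measure M"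
  using prob by (simp add: prob_space_def)

lemma sfL: "sigma_finite_measure (L t)"
  using fin_Icc[of 0 t] by (simp add: finite_measure_def)

lemma sfM: "sigma_finite_measure M"
  using finM by (simp add: finite_measure_def)

lemma finLM: "finite_measure (L t \<Otimes>\<^sub>M M)"
  by (rule finite_measure_pair_measure[OF finM fin_Icc])

lemma psfLM: "pair_sigma_finite (L t) M"
  unfolding pair_sigma_finite_def
  using sfL sfM by (simp add: pair_sigma_finite_def)

lemma swap1:
  assumes f: "f \<in> F" and t: "0 \<le> t"
  shows "(\<integral>x. (\<integral>s. (\<integral>r. H f x s r \<partial>L t) \<partial>L t) \<partial>M) = (\<integral>s. (\<integral>x. (\<integral>r. H f x s r \<partial>L t) \<partial>M) \<partial>L t)"
proof -
  have m: "(\<lambda>(w, r). H f (snd w) (fst w) r) \<in> borel_measurable ((L t \<Otimes>\<^sub>M M) \<Otimes>\<^sub>M L t)"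
  proof -
    have a1: "(\<lambda>p. fst (fst p)) \<in> (L t \<Otimes>\<^sub>M M) \<Otimes>\<^sub>M L t \<rightarrow>\<^sub>M lborel"
      by (rule to_lborel[where A="{0..t}"]) measurable
    have a2: "(\<lambda>p. snd p) \<in> (L t \<Otimes>\<^sub>M M) \<Otimes>\<^sub>M L t \<rightarrow>\<^sub>M lborel"
      by (rule to_lborel[where A="{0..t}"]) measurable
    have b: "(\<lambda>p. snd (fst p)) \<in> (L t \<Otimes>\<^sub>M M) \<Otimes>\<^sub>M L t \<rightarrow>\<^sub>M M" by measurable
    show ?thesis using H_meas_gen[OF f a1 a2 b] by (simp add: case_prod_beta')
  qed
  have m2: "(\<lambda>w. \<integral>r. H f (snd w) (fst w) r \<partial>L t) \<in> borel_measurable (L t \<Otimes>\<^sub>M M)"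
    using sigma_finite_measure.borel_measurable_lebesgue_integral[OF sfL m] by simp
  have int: "integrable (L t \<Otimes>\<^sub>M M) (\<lambda>(s, x). \<integral>r. H f x s r \<partial>L t)"
  proof (rule finite_measure.integrable_const_bound[OF finLM])
    show "(\<lambda>(s, x). \<integral>r. H f x s r \<partial>L t) \<in> borel_measurable (L t \<Otimes>\<^sub>M M)"
      using m2 by (simp add: case_prod_beta')
    show "AE w in L t \<Otimes>\<^sub>M M. norm ((\<lambda>(s, x). \<integral>r. H f x s r \<partial>L t) w) \<le> (S f * S f) * t"
    proof (rule AE_I2)
      fix w assume w: "w \<in> space (L t \<Otimes>\<^sub>M M)"
      then have x: "snd w \<in> space M" by (auto simp: space_pair_measure)
      show "norm ((\<lambda>(s, x). \<integral>r. H f x s r \<partial>L t) w) \<le> (S f * S f) * t"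
        unfolding case_prod_beta' by (intro norm_int_Icc[OF t] H_bound[OF f x])
    qed
  qed
  show ?thesis
    using pair_sigma_finite.Fubini_integral[OF psfLM int] by simp
qed

lemma swap2:
  assumes f: "f \<in> F" and t: "0 \<le> t"
  shows "(\<integral>x. (\<integral>r. H f x s r \<partial>L t) \<partial>M) = (\<integral>r. (\<integral>x. H f x s r \<partial>M) \<partial>L t)"
proof -
  have int: "integrable (L t \<Otimes>\<^sub>M M) (\<lambda>(r, x). H f x s r)"
  proof (rule finite_measure.integrable_const_bound[OF finLM])
    have a1: "(\<lambda>p. s) \<in> L t \<Otimes>\<^sub>M M \<rightarrow>\<^sub>M lborel" by measurable
    have a2: "(\<lambda>p. fst p) \<in> L t \<Otimes>\<^sub>M M \<rightarrow>\<^sub>M lborel" by (rule to_lborel[where A="{0..t}"]) measurable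
    have b: "(\<lambda>p. snd p) \<in> L t \<Otimes>\<^sub>M M \<rightarrow>\<^sub>M M" by measurable
    show "(\<lambda>(r, x). H f x s r) \<in> borel_measurable (L t \<Otimes>\<^sub>M M)"
      using H_meas_gen[OF f a1 a2 b] by (simp add: case_prod_beta')
    show "AE w in L t \<Otimes>\<^sub>M M. norm ((\<lambda>(r, x). H f x s r) w) \<le> S f * S f"
    proof (rule AE_I2)
      fix w assume w: "w \<in> space (L t \<Otimes>\<^sub>M M)"
      then have x: "snd w \<in> space M" by (auto simp: space_pair_measure)
      show "norm ((\<lambda>(r, x). H f x s r) w) \<le> S f * S f"
        unfolding case_prod_beta' by (rule H_bound[OF f x])
    qed
  qed
  show ?thesis
    using pair_sigma_finite.Fubini_integral[OF psfLM int] by simp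
qed

lemma total_expand:
  assumes f: "f \<in> F" and t: "0 \<le> t"
  shows "(\<integral>x. I f t x * cnj (I f t x) \<partial>M) = (\<integral>s. (\<integral>r. E f s r \<partial>L t) \<partial>L t)"
proof -
  have "(\<integral>x. I f t x * cnj (I f t x) \<partial>M) = (\<integral>x. (\<integral>s. (\<integral>r. H f x s r \<partial>L t) \<partial>L t) \<partial>M)"
    by (rule Bochner_Integration.integral_cong[OF refl]) (rule sq_expand)
  also have "\<dots> = (\<integral>s. (\<integral>x. (\<integral>r. H f x s r \<partial>L t) \<partial>M) \<partial>L t)" by (rule swap1[OF f t])
  also have "\<dots> = (\<integral>s. (\<integral>r. E f s r \<partial>L t) \<partial>L t)"
    unfolding swap2[OF f t] by (simp add: E_def H_def)
  finally show ?thesis .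
qed

end

context mfs begin

lemma ind_int:
  assumes t: "0 \<le> t" and K: "0 \<le> K"
  shows "(\<integral>r. indicator {s - K<..<s + K} r \<partial>L t) \<le> 2 * K"
proof -
  let ?A = "{s - K<..<s + K}"
  have "(\<integral>r. indicator ?A r \<partial>L t) = measure (L t) (?A \<inter> {0..t})"
    by (simp add: space_restrict_space)
  also have "\<dots> = measure lborel (?A \<inter> {0..t})"
    by (rule measure_restrict_space) auto
  also have "\<dots> \<le> measure lborel {s - K..s + K}"
    by (rule measure_mono_fmeasurable) (auto simp: fmeasurable_def emeasure_lborel_Icc_eq)
  also have "\<dots> = 2 * K" using K by simp
  finally show ?thesis .
qed

lemma int_bound_s:
  assumes f: "f \<in> F" and f0: "(\<integral>x. f x \<partial>M) = 0" and t: "0 \<le> t" and K: "K \<ge> 1"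
  shows "cmod (\<integral>r. E f s r \<partial>L t) \<le> (S f)\<^sup>2 * (2 * K) + CM * (S f)\<^sup>2 * K powr (- \<eta>) * t"
proof -
  define c where "c = CM * (S f)\<^sup>2 * K powr (- \<eta>)"
  have c0: "0 \<le> c" unfolding c_def using CM_pos by simp
  have R0: "0 \<le> (S f)\<^sup>2 * (2 * K) + c * t" using c0 t K by simp
  show ?thesis
  proof (cases "integrable (L t) (E f s)")
    case False
    then show ?thesis using R0 by (simp add: not_integrable_integral_eq c_def)
  next
    case True
    have ii: "integrable (L t) (\<lambda>r. indicator {s - K<..<s + K} r :: real)"
    proof (rule finite_measure.integrable_const_bound[OF fin_Icc, where B=1])
      show "(\<lambda>r. indicator {s - K<..<s + K} r :: real) \<in> borel_measurable (L t)"
        by (rule measurable_restrict_space1) measurable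
    qed (auto simp: indicator_def)
    have "cmod (\<integral>r. E f s r \<partial>L t) \<le> (\<integral>r. cmod (E f s r) \<partial>L t)" by (rule integral_norm_bound)
    also have "\<dots> \<le> (\<integral>r. (S f)\<^sup>2 * indicator {s - K<..<s + K} r + c \<partial>L t)"
      unfolding c_def
      using True ii fin_Icc[of 0 t] E_bound[OF f f0 K]
      by (intro integral_mono) (auto intro!: finite_measure.integrable_const)
    also have "\<dots> = (S f)\<^sup>2 * (\<integral>r. indicator {s - K<..<s + K} r \<partial>L t) + c * t"
      using ii fin_Icc[of 0 t] meas_Icc[OF t]
      by (simp add: Bochner_Integration.integral_add finite_measure.integrable_const
                    integral_mult_right_zero del: integral_indicator)
    also have "\<dots> \<le> (S f)\<^sup>2 * (2 * K) + c * t"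
      using ind_int[OF t, of K s] K c0 t by (intro add_mono mult_left_mono) auto
    finally show ?thesis by (simp add: c_def)
  qed
qed

definition e0 :: real where "e0 = min (1/2) (\<eta>/2)"

lemma e0_pos: "0 < e0" and e0_le: "e0 \<le> 1/2" "e0 \<le> \<eta>/2"
  using eta_pos by (auto simp: e0_def)

lemma L2_bound:
  assumes f: "f \<in> F" and f0: "(\<integral>x. f x \<partial>M) = 0" and t: "1 \<le> t"
  shows "(\<integral>x. (cmod (I f t x))\<^sup>2 \<partial>M) \<le> (2 + CM) * (S f)\<^sup>2 * t powr (2 - e0)"
proof -
  define K where "K = sqrt t"
  have K1: "K \<ge> 1" using t by (simp add: K_def)
  have t0: "0 \<le> t" using t by simp
  have "(\<integral>x. (cmod (I f t x))\<^sup>2 \<partial>M) \<le> cmod (complex_of_real (\<integral>x. (cmod (I f t x))\<^sup>2 \<partial>M))"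
    by simp
  also have "complex_of_real (\<integral>x. (cmod (I f t x))\<^sup>2 \<partial>M) = (\<integral>x. I f t x * cnj (I f t x) \<partial>M)"
    unfolding integral_complex_of_real[symmetric] complex_norm_square ..
  also have "\<dots> = (\<integral>s. (\<integral>r. E f s r \<partial>L t) \<partial>L t)" by (rule total_expand[OF f t0])
  also have "cmod \<dots> \<le> ((S f)\<^sup>2 * (2 * K) + CM * (S f)\<^sup>2 * K powr (- \<eta>) * t) * t"
    by (rule norm_int_Icc[OF t0]) (rule int_bound_s[OF f f0 t0 K1])
  also have "\<dots> = (S f)\<^sup>2 * (2 * t powr (3/2) + CM * t powr (2 - \<eta>/2))"
  proof -
    have Kp: "K = t powr (1/2)" using t by (simp add: K_def powr_half_sqrt)
    have a: "K * t = t powr (3/2)"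
    proof -
      have "K * t = t powr (1/2) * t powr 1" using t by (simp add: Kp)
      also have "\<dots> = t powr (3/2)" by (subst powr_add[symmetric]) simp
      finally show ?thesis .
    qed
    have b: "K powr (- \<eta>) * t * t = t powr (2 - \<eta>/2)"
    proof -
      have "K powr (- \<eta>) * t * t = t powr (- \<eta>/2) * t powr 1 * t powr 1"
        using t by (simp add: Kp powr_powr)
      also have "\<dots> = t powr (2 - \<eta>/2)" by (subst powr_add[symmetric])+ (simp add: algebra_simps)
      finally show ?thesis .
    qed
    show ?thesis unfolding a[symmetric] b[symmetric] by (simp add: algebra_simps)
  qed
  also have "\<dots> \<le> (S f)\<^sup>2 * (2 * t powr (2 - e0) + CM * t powr (2 - e0))"
    using t e0_le CM_pos by (intro mult_left_mono add_mono powr_mono mult_left_mono) auto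
  also have "\<dots> = (2 + CM) * (S f)\<^sup>2 * t powr (2 - e0)" by (simp add: algebra_simps)
  finally show ?thesis .
qed

end

context mfs begin

lemma cheb:
  assumes f: "f \<in> F" and f0: "(\<integral>x. f x \<partial>M) = 0" and t: "1 \<le> t" and lam: "0 < lam"
  shows "measure M {x \<in> space M. lam < cmod (I f t x)} \<le> (2 + CM) * (S f)\<^sup>2 * t powr (2 - e0) / lam\<^sup>2"
proof -
  let ?u = "\<lambda>x. (cmod (I f t x))\<^sup>2"
  have um: "?u \<in> borel_measurable M" using I_meas[OF f, of t] by measurable
  have ui: "integrable M ?u"
  proof (rule finite_measure.integrable_const_bound[OF finM _ um, where B="(S f * t)\<^sup>2"])
    show "AE x in M. norm (?u x) \<le> (S f * t)\<^sup>2"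
    proof (rule AE_I2)
      fix x assume x: "x \<in> space M"
      show "norm (?u x) \<le> (S f * t)\<^sup>2"
        using I_bound[OF f x, of t] t by (simp add: power_mono)
    qed
  qed
  have "measure M {x \<in> space M. lam < cmod (I f t x)} \<le> measure M {x \<in> space M. lam\<^sup>2 \<le> ?u x}"
  proof (rule finite_measure.finite_measure_mono[OF finM])
    show "{x \<in> space M. lam\<^sup>2 \<le> ?u x} \<in> sets M" using um by measurable
    show "{x \<in> space M. lam < cmod (I f t x)} \<subseteq> {x \<in> space M. lam\<^sup>2 \<le> ?u x}"
      using lam by (auto intro: power_mono)
  qed
  also have "\<dots> \<le> (\<integral>x. ?u x \<partial>M) / lam\<^sup>2"
    by (rule integral_Markov_inequality_measure[OF ui, where A="space M"]) (use lam in auto)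
  also have "\<dots> \<le> (2 + CM) * (S f)\<^sup>2 * t powr (2 - e0) / lam\<^sup>2"
    by (rule divide_right_mono[OF L2_bound[OF f f0 t]]) simp
  finally show ?thesis .
qed

lemma fin_Ioc: "a \<le> b \<Longrightarrow> finite_measure (restrict_space lborel {a<..b::real})"
  apply (rule finite_measureI)
  apply (simp add: space_restrict_space emeasure_restrict_space)
  done

lemma split_bound:
  assumes f: "f \<in> F" and x: "x \<in> space M" and u: "0 \<le> u" "u \<le> t"
  shows "cmod (I f t x - I f u x) \<le> S f * (t - u)"
proof -
  let ?g = "\<lambda>s. f (\<phi> s x)"
  have gm: "?g \<in> borel_measurable lborel"
    using f_meas_gen[OF f, of "\<lambda>s. s" lborel "\<lambda>_. x"] x by simp
  have gb: "\<And>s. cmod (?g s) \<le> S f" using F_bound[OF f phi_space[OF x]] .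
  have intg: "integrable lborel (\<lambda>s. indicator A s *\<^sub>R ?g s)" if A: "A \<in> sets lborel" "emeasure lborel A < \<infinity>" for A
  proof -
    have "finite_measure (restrict_space lborel A)"
      by (rule finite_measureI) (use A in \<open>simp add: space_restrict_space emeasure_restrict_space\<close>)
    then have "integrable (restrict_space lborel A) ?g"
      by (rule finite_measure.integrable_const_bound[where B="S f"])
         (use gb gm in \<open>auto intro: measurable_restrict_space1\<close>)
    then show ?thesis using A by (simp add: integrable_restrict_space)
  qed
  have "I f t x - I f u x = (\<integral>s. indicator {0..t} s *\<^sub>R ?g s \<partial>lborel) - (\<integral>s. indicator {0..u} s *\<^sub>R ?g s \<partial>lborel)"
    unfolding I_def by (simp add: integral_restrict_space)
  also have "\<dots> = (\<integral>s. indicator {0..t} s *\<^sub>R ?g s - indicator {0..u} s *\<^sub>R ?g s \<partial>lborel)"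
    by (rule Bochner_Integration.integral_diff[symmetric]) (auto intro!: intg simp: emeasure_lborel_Icc_eq)
  also have "\<dots> = (\<integral>s. indicator {u<..t} s *\<^sub>R ?g s \<partial>lborel)"
    by (rule Bochner_Integration.integral_cong[OF refl]) (use u in \<open>auto simp: indicator_def\<close>)
  also have "\<dots> = integral\<^sup>L (restrict_space lborel {u<..t}) ?g"
    by (simp add: integral_restrict_space)
  finally have eq: "I f t x - I f u x = integral\<^sup>L (restrict_space lborel {u<..t}) ?g" .
  have "cmod (integral\<^sup>L (restrict_space lborel {u<..t}) ?g)
        \<le> S f * measure (restrict_space lborel {u<..t}) (space (restrict_space lborel {u<..t}))"
    by (rule norm_int_le[OF fin_Ioc[OF u(2)]]) (rule gb)
  also have "measure (restrict_space lborel {u<..t}) (space (restrict_space lborel {u<..t})) = t - u"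
    using u by (simp add: space_restrict_space measure_restrict_space)
  finally show ?thesis using eq by simp
qed

end

context mfs begin

definition a :: nat where "a = nat \<lceil>4 / e0\<rceil> + 1"

lemma a_props: "4 \<le> real a * e0" "2 \<le> a"
proof -
  have e: "0 < e0" "e0 \<le> 1/2" using e0_pos e0_le by auto
  have "4 / e0 \<le> real (nat \<lceil>4 / e0\<rceil>)" by linarith
  then have r: "4 / e0 \<le> real a" unfolding a_def by simp
  then have "4 / e0 * e0 \<le> real a * e0" using e by (intro mult_right_mono) auto
  then show "4 \<le> real a * e0" using e by simp
  have "8 \<le> 4 / e0" using e by (simp add: field_simps)
  with r show "2 \<le> a" by simp
qed

definition tt :: "nat \<Rightarrow> real" where "tt n = real n ^ a"

definition q :: real where "q = 1 - 1 / real a"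

lemma q_props: "0 < q" "q < 1" "real a * q = real a - 1"
  using a_props(2) by (auto simp: q_def field_simps)

definition B :: "('a \<Rightarrow> complex) \<Rightarrow> nat \<Rightarrow> 'a set" where
  "B f n = {x \<in> space M. S f * tt n powr q < cmod (I f (tt n) x)}"

definition h :: "nat \<Rightarrow> real" where "h n = (2 + CM) * real n powr (-2)"

lemma B_meas: "f \<in> F \<Longrightarrow> B f n \<in> sets M"
  unfolding B_def using I_meas[of f "tt n"] by measurable

lemma tt_powr: "1 \<le> n \<Longrightarrow> tt n powr p = real n powr (real a * p)"
  unfolding tt_def by (simp add: powr_realpow[symmetric] powr_powr)

lemma tt_ge1: "1 \<le> n \<Longrightarrow> 1 \<le> tt n"
  unfolding tt_def by simp

lemma B_bound:
  assumes f: "f \<in> F" and f0: "(\<integral>x. f x \<partial>M) = 0" and S0: "0 < S f" and n: "1 \<le> n"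
  shows "measure M (B f n) \<le> h n"
proof -
  have T1: "1 \<le> tt n" by (rule tt_ge1[OF n])
  define T where "T = tt n"
  have lam: "0 < S f * T powr q" using S0 T1 by (simp add: T_def)
  have "measure M (B f n) \<le> (2 + CM) * (S f)\<^sup>2 * T powr (2 - e0) / (S f * T powr q)\<^sup>2"
    unfolding B_def T_def by (rule cheb[OF f f0 T1 lam[unfolded T_def]])
  also have "(S f * T powr q)\<^sup>2 = (S f)\<^sup>2 * T powr (2 * q)"
  proof -
    have "(T powr q)\<^sup>2 = T powr q * T powr q" by (simp add: power2_eq_square)
    also have "\<dots> = T powr (2 * q)" by (simp add: powr_add[symmetric])
    finally show ?thesis by (simp add: power_mult_distrib)
  qed
  also have "(2 + CM) * (S f)\<^sup>2 * T powr (2 - e0) / ((S f)\<^sup>2 * T powr (2 * q))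
           = (2 + CM) * T powr (2 - e0 - 2 * q)"
  proof -
    have Y: "0 < T powr (2 * q)" using T1 by (simp add: T_def)
    have S2: "0 < (S f)\<^sup>2" using S0 by simp
    have "(2 + CM) * (S f)\<^sup>2 * T powr (2 - e0) / ((S f)\<^sup>2 * T powr (2 * q))
        = (2 + CM) * (T powr (2 - e0) / T powr (2 * q))"
      using Y S2 by (simp add: field_simps)
    also have "T powr (2 - e0) / T powr (2 * q) = T powr (2 - e0 - 2 * q)"
      by (rule powr_diff[symmetric])
    finally show ?thesis .
  qed
  also have "\<dots> = (2 + CM) * real n powr (real a * (2 - e0 - 2 * q))"
    unfolding T_def by (simp add: tt_powr[OF n])
  also have "\<dots> \<le> (2 + CM) * real n powr (-2)"
  proof -
    have "real a * (2 - e0 - 2 * q) = 2 - real a * e0"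
      using q_props(3) by (simp add: algebra_simps)
    then have "real a * (2 - e0 - 2 * q) \<le> -2" using a_props(1) by simp
    then show ?thesis using n CM_pos by (intro mult_left_mono powr_mono) auto
  qed
  finally show ?thesis by (simp add: h_def)
qed

definition Cp :: real where "Cp = 1 + real a * 2 ^ (a - 1)"

lemma interp:
  assumes f: "f \<in> F" and x: "x \<in> space M" and n: "1 \<le> n"
    and t1: "tt n \<le> t" and t2: "t \<le> tt (n + 1)" and nB: "x \<notin> B f n"
  shows "cmod (I f t x) \<le> Cp * S f * t powr q"
proof -
  define T where "T = tt n"
  have T1: "1 \<le> T" using tt_ge1[OF n] by (simp add: T_def)
  have Sn: "0 \<le> S f" by (rule S_nonneg[OF f])
  have IT: "cmod (I f T x) \<le> S f * T powr q" using nB x unfolding B_def T_def by auto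
  have "cmod (I f t x) \<le> cmod (I f T x) + cmod (I f t x - I f T x)"
    by (rule norm_triangle_sub)
  also have "\<dots> \<le> S f * T powr q + S f * (t - T)"
    using IT split_bound[OF f x, of T t] T1 t1 by (intro add_mono) (auto simp: T_def)
  also have "t - T \<le> real a * 2 ^ (a - 1) * T powr q"
  proof -
    have "t - T \<le> (real n + 1) ^ a - real n ^ a" using t2 by (simp add: tt_def T_def add.commute)
    also have "\<dots> \<le> real a * (real n + 1) ^ (a - 1) * ((real n + 1) - real n)"
      by (rule pow_diff_le) auto
    also have "\<dots> = real a * (real n + 1) ^ (a - 1)" by simp
    also have "\<dots> \<le> real a * (2 * real n) ^ (a - 1)"
      using n by (intro mult_left_mono power_mono) auto
    also have "\<dots> = real a * 2 ^ (a - 1) * real n ^ (a - 1)" by (simp add: power_mult_distrib)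
    also have "real n ^ (a - 1) = T powr q"
    proof -
      have "T powr q = real n powr (real a - 1)" using q_props(3) by (simp add: T_def tt_powr[OF n])
      also have "\<dots> = real n powr (real (a - 1))" using a_props(2) by (simp add: of_nat_diff)
      also have "\<dots> = real n ^ (a - 1)" using n by (simp add: powr_realpow)
      finally show ?thesis by simp
    qed
    finally show ?thesis .
  qed
  then have "S f * (t - T) \<le> S f * (real a * 2 ^ (a - 1) * T powr q)" using Sn by (rule mult_left_mono)
  then have "S f * T powr q + S f * (t - T) \<le> S f * T powr q + S f * (real a * 2 ^ (a - 1) * T powr q)"
    by simp
  also have "\<dots> = Cp * S f * T powr q" by (simp add: Cp_def algebra_simps)
  also have "\<dots> \<le> Cp * S f * t powr q"
    using Sn T1 t1 q_props(1) by (intro mult_left_mono powr_mono2) (auto simp: Cp_def T_def)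
  finally show ?thesis by simp
qed

end

context mfs begin

lemma h_summable: "summable h"
  unfolding h_def by (intro summable_mult) (simp add: summable_real_powr_iff)

lemma main:
  "\<exists>\<eta>' C'. 0 < \<eta>' \<and> \<eta>' < 1 \<and> C' > 0 \<and>
           (\<forall>\<omega>>0. \<exists>m'\<ge>1. \<forall>f\<in>F. (\<integral>x. f x \<partial>M) = 0 \<longrightarrow>
              (\<exists>Y\<in>sets M. measure M Y \<ge> 1 - \<omega> \<and>
                 (\<forall>x\<in>Y. \<forall>t\<ge>m'.
                    cmod (\<integral>s. f (\<phi> s x) \<partial>(restrict_space lborel {0..t}))
                      \<le> C' * S f * t powr (1 - \<eta>'))))"
proof -
  have a2: "2 \<le> a" by (rule a_props(2))
  have Cp0: "0 < Cp" unfolding Cp_def by (simp add: add_pos_nonneg)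
  have mp: "\<forall>\<omega>>0. \<exists>m'\<ge>1. \<forall>f\<in>F. (\<integral>x. f x \<partial>M) = 0 \<longrightarrow>
              (\<exists>Y\<in>sets M. measure M Y \<ge> 1 - \<omega> \<and>
                 (\<forall>x\<in>Y. \<forall>t\<ge>m'.
                    cmod (\<integral>s. f (\<phi> s x) \<partial>(restrict_space lborel {0..t}))
                      \<le> Cp * S f * t powr (1 - 1 / real a)))"
  proof (intro allI impI)
  fix \<omega> :: real assume \<omega>: "0 < \<omega>"
  have "(\<lambda>N. \<Sum>k. h (k + N)) \<longlonglongrightarrow> 0" by (rule suminf_exist_split2[OF h_summable])
  from order_tendstoD(2)[OF this \<omega>] obtain N0 where N0: "\<And>N. N \<ge> N0 \<Longrightarrow> (\<Sum>k. h (k + N)) < \<omega>"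
    unfolding eventually_sequentially by blast
  define N where "N = Suc N0"
  have N1: "1 \<le> N" and hN: "(\<Sum>k. h (k + N)) < \<omega>" using N0[of N] by (auto simp: N_def)
  show "\<exists>m'\<ge>1. \<forall>f\<in>F. (\<integral>x. f x \<partial>M) = 0 \<longrightarrow>
              (\<exists>Y\<in>sets M. measure M Y \<ge> 1 - \<omega> \<and>
                 (\<forall>x\<in>Y. \<forall>t\<ge>m'.
                    cmod (\<integral>s. f (\<phi> s x) \<partial>(restrict_space lborel {0..t}))
                      \<le> Cp * S f * t powr (1 - 1 / real a)))"
  proof (intro exI[of _ "tt N"] conjI ballI impI)
    show "1 \<le> tt N" by (rule tt_ge1[OF N1])
    fix f assume f: "f \<in> F" and f0: "(\<integral>x. f x \<partial>M) = 0"
    have qq: "1 - 1 / real a = q" by (simp add: q_def)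
    show "\<exists>Y\<in>sets M. measure M Y \<ge> 1 - \<omega> \<and>
                 (\<forall>x\<in>Y. \<forall>t\<ge>tt N.
                    cmod (\<integral>s. f (\<phi> s x) \<partial>(restrict_space lborel {0..t}))
                      \<le> Cp * S f * t powr (1 - 1 / real a))"
    proof (cases "S f = 0")
      case True
      show ?thesis
      proof (intro bexI[of _ "space M"] conjI ballI allI impI)
        show "space M \<in> sets M" by simp
        show "1 - \<omega> \<le> measure M (space M)" using prob_space.prob_space[OF prob] \<omega> by simp
        fix x t assume x: "x \<in> space M" and t: "tt N \<le> t"
        have "0 \<le> t" using t tt_ge1[OF N1] by simp
        then have "cmod (I f t x) \<le> 0" using I_bound[OF f x] True by fastforce
        then show "cmod (\<integral>s. f (\<phi> s x) \<partial>(restrict_space lborel {0..t})) \<le> Cp * S f * t powr (1 - 1 / real a)"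
          using True by (simp add: I_def)
      qed
    next
      case False
      then have S0: "0 < S f" using S_nonneg[OF f] by simp
      define U where "U = (\<Union>k. B f (k + N))"
      have Um: "U \<in> sets M" unfolding U_def using B_meas[OF f] by blast
      have Bh: "measure M (B f (k + N)) \<le> h (k + N)" for k
        using B_bound[OF f f0 S0] N1 by simp
      have hsN: "summable (\<lambda>k. h (k + N))" using h_summable by (simp add: summable_iff_shift)
      have bs: "summable (\<lambda>k. measure M (B f (k + N)))"
        by (rule summable_comparison_test[OF _ hsN]) (use Bh in auto)
      have "measure M U \<le> (\<Sum>k. measure M (B f (k + N)))"
        unfolding U_def
        by (rule finite_measure.finite_measure_subadditive_countably[OF finM _ bs]) (use B_meas[OF f] in auto)
      also have "\<dots> \<le> (\<Sum>k. h (k + N))" by (rule suminf_le[OF Bh bs hsN])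
      finally have mU: "measure M U < \<omega>" using hN by simp
      show ?thesis
      proof (intro bexI[of _ "space M - U"] conjI ballI allI impI)
        show "space M - U \<in> sets M" using Um by blast
        show "1 - \<omega> \<le> measure M (space M - U)"
          using prob_space.prob_compl[OF prob Um] mU by simp
        fix x t assume x: "x \<in> space M - U" and t: "tt N \<le> t"
        have t1: "1 \<le> t" using t tt_ge1[OF N1] by simp
        define r where "r = t powr (1 / real a)"
        have r1: "1 \<le> r" unfolding r_def using t1 by (intro ge_one_powr_ge_zero) auto
        have ra: "r ^ a = t"
        proof -
          have "r ^ a = r powr real a" using r1 by (simp add: powr_realpow)
          also have "\<dots> = t" using t1 a2 by (simp add: r_def powr_powr)
          finally show ?thesis .
        qed
        define n where "n = nat \<lfloor>r\<rfloor>"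
        have nr: "real n \<le> r" "r < real n + 1" using r1 by (auto simp: n_def)
        have "real N = tt N powr (1 / real a)" using a2 N1 by (simp add: tt_powr)
        also have "\<dots> \<le> r" unfolding r_def using t tt_ge1[OF N1] by (intro powr_mono2) auto
        finally have "real N \<le> r" .
        then have nN: "N \<le> n" unfolding n_def by linarith
        have n1: "1 \<le> n" using nN N1 by simp
        have tl: "tt n \<le> t" unfolding tt_def using nr ra by (metis of_nat_0_le_iff power_mono)
        have tu: "t \<le> tt (n + 1)" unfolding tt_def using nr r1 ra
          by (metis add.commute less_imp_le of_nat_Suc order_trans zero_le_one power_mono Suc_eq_plus1)
        have xs: "x \<in> space M" using x by simp
        have "x \<notin> B f n"
        proof
          assume "x \<in> B f n"
          then have "x \<in> B f ((n - N) + N)" using nN by simp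
          then have "x \<in> U" unfolding U_def by blast
          then show False using x by simp
        qed
        from interp[OF f xs n1 tl tu this]
        show "cmod (\<integral>s. f (\<phi> s x) \<partial>(restrict_space lborel {0..t})) \<le> Cp * S f * t powr (1 - 1 / real a)"
          by (simp add: I_def qq)
      qed
    qed
  qed
  qed
  show ?thesis
    apply (rule exI[of _ "1 / real a"], rule exI[of _ Cp])
    using a2 Cp0 mp by simp
qed

end


theorem lemma2p6:
  fixes M :: "'a measure" and \<phi> :: "real \<Rightarrow> 'a \<Rightarrow> 'a"
    and F :: "('a \<Rightarrow> complex) set" and S :: "('a \<Rightarrow> complex) \<Rightarrow> real"
    and C\<^sub>M \<eta> :: real
  assumes "mixing_flow_setting M \<phi> F S C\<^sub>M \<eta>"
  shows "\<exists>\<eta>' C'. 0 < \<eta>' \<and> \<eta>' < 1 \<and> C' > 0 \<and>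
           (\<forall>\<omega>>0. \<exists>m'\<ge>1. \<forall>f\<in>F. (\<integral>x. f x \<partial>M) = 0 \<longrightarrow>
              (\<exists>Y\<in>sets M. measure M Y \<ge> 1 - \<omega> \<and>
                 (\<forall>x\<in>Y. \<forall>t\<ge>m'.
                    cmod (\<integral>s. f (\<phi> s x) \<partial>(restrict_space lborel {0..t}))
                      \<le> C' * S f * t powr (1 - \<eta>'))))"
proof -
  interpret mfs M \<phi> F S C\<^sub>M \<eta> by unfold_locales (rule assms)
  show ?thesis by (rule main)
qed

end
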